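(* Let $K\subseteq R\,\mathbb{B}_1^n$, $R\in\mathbb{N}$, be a compact convex set and let $P=\{\mathbf{x}\in\mathbb{R}^n:\mathsf{A}\mathbf{x}\le\mathbf{b}\}$, $\mathsf{A}\in\mathbb{Z}^{m\times n}$, $\mathbf{b}\in\mathbb{Z}^m$, with $P\cap K=\emptyset$ (and all rows $\mathbf{a}_i$ of $\mathsf{A}$ nonzero). For each $i\in[m]$ let $(\mathbf{a}'_i,b'_i,k_i,\mathbf{a}_{i,1},b_{i,1},\gamma_{i,1},\dots,\mathbf{a}_{i,k_i},b_{i,k_i},\gamma_{i,k_i})$ be a valid substitution sequence of $\mathbf{a}_i\mathbf{x}\le b_i$ of precision $R$, $N:=10nR$, $M:=(10nR)^{n+2}$, and let $P'=\{\mathbf{x}\in\mathbb{R}^n:\mathsf{A}'\mathbf{x}\le\mathbf{b}'\}$ where $\mathsf{A}'$ has rows $\mathbf{a}'_1,\dots,\mathbf{a}'_m$ and $\mathbf{b}'=(b'_1,\dots,b'_m)$. Then there exists an ordered list $\mathcal{L}=(\mathbf{a}_{j_1,p_1},-\mathbf{a}_{j_1,p_1},\dots,\mathbf{a}_{j_l,p_l},-\mathbf{a}_{j_l,p_l})$ with $j_r\in[m]$ and $p_r\in[k_{j_r}-1]$ for $r\in[l]$, such that $\mathrm{CG}(K\cap P',\mathcal{L})=\emptyset$ and $|\mathcal{L}|=2l\le 2(n+1)$.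
   Context: $\mathbb{B}_1^n$ is the unit $\ell_1$ ball. Notation: $\mathsf{A}\mathbf{x}\le\mathbf{b}\Rightarrow_R\mathbf{c}\mathbf{x}\le d$ means $\{\mathbf{x}:\|\mathbf{x}\|_1\le R,\ \mathsf{A}\mathbf{x}\le\mathbf{b}\}\subseteq\{\mathbf{x}:\|\mathbf{x}\|_1\le R,\ \mathbf{c}\mathbf{x}\le d\}$ (similarly with $<$; systems may include equalities). A valid substitution sequence of an inequality $\mathbf{a}\mathbf{x}\le b$ ($\mathbf{a}\in\mathbb{Z}^n\setminus\{0\}$, $b\in\mathbb{Z}$) of precision $R,N,M\in\mathbb{N}$ is a list $(\mathbf{a}',b',k,\mathbf{a}_1,b_1,\gamma_1,\dots,\mathbf{a}_k,b_k,\gamma_k)$ with $k\in[n+1]$, $\mathbf{a}',\mathbf{a}_i\in\mathbb{Z}^n$, $b',b_i\in\mathbb{Z}$, $\gamma_i\in\mathbb{R}_+$, $\gamma_k=0$, such that: (1) $\|\mathbf{a}'\|_\infty\le N^nM^{n+1}$, $|b'|\le RN^nM^{n+1}$, and $\|\mathbf{a}_i\|_\infty\le 11nN^n$, $|b_i|\le R\|\mathbf{a}_i\|_\infty+1$ for all $i\in[k]$; (2) for each $l\in[k-1]$: $\mathbf{a}'\mathbf{x}\le b',\ \mathbf{a}_i\mathbf{x}=b_i\ \forall i\in[l-1]\ \Rightarrow_R\ \mathbf{a}_l\mathbf{x}<b_l+1$; (3) for each $l\in[k]$: $\mathbf{a}'\mathbf{x}\le b',\ \mathbf{a}_i\mathbf{x}=b_i\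 \forall i\in[l-1]\ \Rightarrow_R\ \mathbf{a}\mathbf{x}\le b+\gamma_l$; (4) for each $l\in[k-1]$: $\mathbf{a}_l\mathbf{x}\le b_l-1,\ \mathbf{a}_i\mathbf{x}=b_i\ \forall i\in[l-1]\ \Rightarrow_R\ \mathbf{a}\mathbf{x}\le b-n\gamma_l$. Support function $h_K(\mathbf{a})=\sup_{\mathbf{x}\in K}\mathbf{a}\mathbf{x}$ with $h_\emptyset\equiv-\infty$; for $\mathbf{a}\in\mathbb{Z}^n$, $\mathrm{CG}(K,\mathbf{a}):=K\cap\{\mathbf{x}:\mathbf{a}\mathbf{x}\le\lfloor h_K(\mathbf{a})\rfloor\}$; for a list, cuts are applied one by one from left to right: $\mathrm{CG}(K,(\mathbf{a}_1,\dots,\mathbf{a}_k)):=\mathrm{CG}(\mathrm{CG}(K,\mathbf{a}_1),(\mathbf{a}_2,\dots,\mathbf{a}_k))$, $\mathrm{CG}(K,\emptyset)=K$. *)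

theory Defs
  imports "HOL-Analysis.Analysis"
begin

definition idot :: "int ^ 'n \<Rightarrow> real ^ 'n \<Rightarrow> real" where
  "idot a x = (\<Sum>i\<in>UNIV. real_of_int (a $ i) * x $ i)"

definition l1norm :: "real ^ 'n \<Rightarrow> real" where
  "l1norm x = (\<Sum>i\<in>UNIV. \<bar>x $ i\<bar>)"

definition l1ball :: "real \<Rightarrow> (real ^ 'n) set" where
  "l1ball R = {x. l1norm x \<le> R}"

definition inorm :: "int ^ 'n \<Rightarrow> int" where
  "inorm a = Max (range (\<lambda>i. \<bar>a $ i\<bar>))"

text \<open>The entries are indexed 1..k;
  n = CARD('n). The implications "=>_R" are set inclusions inside the l1 ball of radius R.\<close>
definition valid_subst ::
  "int ^ 'n \<Rightarrow> int \<Rightarrow> nat \<Rightarrow> nat \<Rightarrow> nat \<Rightarrow>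
   int ^ 'n \<Rightarrow> int \<Rightarrow> nat \<Rightarrow> (nat \<Rightarrow> int ^ 'n) \<Rightarrow> (nat \<Rightarrow> int) \<Rightarrow> (nat \<Rightarrow> real) \<Rightarrow> bool"
  where
  "valid_subst a b R N M a' b' k as bs \<gamma> \<longleftrightarrow>
     (let n = CARD('n) in
      k \<in> {1..n+1} \<and>
      (\<forall>i\<in>{1..k}. \<gamma> i \<ge> 0) \<and> \<gamma> k = 0 \<and>
      inorm a' \<le> int (N ^ n * M ^ (n+1)) \<and>
      \<bar>b'\<bar> \<le> int (R * N ^ n * M ^ (n+1)) \<and>
      (\<forall>i\<in>{1..k}. inorm (as i) \<le> int (11 * n * N ^ n) \<and>
                   \<bar>bs i\<bar> \<le> int R * inorm (as i) + 1) \<and>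
      (\<forall>l\<in>{1..k-1}.
         {x \<in> l1ball (real R). idot a' x \<le> b' \<and> (\<forall>i\<in>{1..<l}. idot (as i) x = bs i)}
         \<subseteq> {x. idot (as l) x < bs l + 1}) \<and>
      (\<forall>l\<in>{1..k}.
         {x \<in> l1ball (real R). idot a' x \<le> b' \<and> (\<forall>i\<in>{1..<l}. idot (as i) x = bs i)}
         \<subseteq> {x. idot a x \<le> b + \<gamma> l}) \<and>
      (\<forall>l\<in>{1..k-1}.
         {x \<in> l1ball (real R). idot (as l) x \<le> bs l - 1 \<and> (\<forall>i\<in>{1..<l}. idot (as i) x = bs i)}
         \<subseteq> {x. idot a x \<le> b - real n * \<gamma> l}))"

text \<open>Support function with values in the extended reals (Sup of the empty set is -infinity).\<close>
definition supp :: "(real ^ 'n) set \<Rightarrow> int ^ 'n \<Rightarrow> ereal" where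
  "supp K a = (SUP x\<in>K. ereal (idot a x))"

text \<open>Chvatal-Gomory cut. For K empty the result is empty; if the support value is
  +infinity (unbounded K, not relevant here) no cut is applied.\<close>
definition CG :: "(real ^ 'n) set \<Rightarrow> int ^ 'n \<Rightarrow> (real ^ 'n) set" where
  "CG K a = (if supp K a = \<infinity> then K
             else {x \<in> K. idot a x \<le> real_of_int \<lfloor>real_of_ereal (supp K a)\<rfloor>})"

primrec CG_list :: "(real ^ 'n) set \<Rightarrow> (int ^ 'n) list \<Rightarrow> (real ^ 'n) set" where
  "CG_list K [] = K"
| "CG_list K (a # as) = CG_list (CG K a) as"

end

theory Submission
  imports Defs
begin

definition ivec :: "int ^ 'n \<Rightarrow> real ^ 'n" where
  "ivec a = (\<chi> j. real_of_int (a $ j))"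

lemma idot_inner: "idot a x = ivec a \<bullet> x"
  by (simp add: idot_def ivec_def inner_vec_def)

lemma idot_neg: "idot (- a) x = - idot a x"
  by (simp add: idot_def sum_negf)

lemma idot_cont: "continuous_on S (idot a)"
  unfolding idot_inner[abs_def] by (intro continuous_intros)

lemma CG_empty: "CG {} a = {}"
  by (simp add: CG_def supp_def)

lemma CG_list_empty: "CG_list {} L = {}"
  by (induction L) (auto simp: CG_empty)

lemma supp_max:
  assumes "x0 \<in> Q" "\<forall>y\<in>Q. idot a y \<le> idot a x0"
  shows "supp Q a = ereal (idot a x0)"
  unfolding supp_def
  by (rule antisym) (auto intro!: SUP_least SUP_upper2[OF assms(1)] simp: assms)

lemma CG_form:
  assumes "compact Q"
  shows "\<exists>c. CG Q a = {x\<in>Q. idot a x \<le> c}"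
proof (cases "Q = {}")
  case True then show ?thesis by (simp add: CG_empty)
next
  case False
  obtain x0 where x0: "x0 \<in> Q" "\<forall>y\<in>Q. idot a y \<le> idot a x0"
    using continuous_attains_sup[OF assms False idot_cont] by blast
  show ?thesis using supp_max[OF x0] by (auto simp: CG_def)
qed

lemma CG_le:
  assumes "compact Q" "\<forall>x\<in>Q. idot a x < real_of_int \<beta> + 1"
  shows "CG Q a \<subseteq> {x\<in>Q. idot a x \<le> \<beta>}"
proof (cases "Q = {}")
  case True then show ?thesis by (simp add: CG_empty)
next
  case False
  obtain x0 where x0: "x0 \<in> Q" "\<forall>y\<in>Q. idot a y \<le> idot a x0"
    using continuous_attains_sup[OF assms(1) False idot_cont] by blast
  have "idot a x0 < real_of_int \<beta> + 1" using assms(2) x0(1) by blast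
  then have "\<lfloor>idot a x0\<rfloor> \<le> \<beta>" by (simp add: floor_le_iff)
  then show ?thesis using supp_max[OF x0] 
    by (auto simp: CG_def)
qed

lemma CG_compact_convex:
  assumes "compact Q" "convex Q"
  shows "compact (CG Q a) \<and> convex (CG Q a) \<and> CG Q a \<subseteq> Q"
proof -
  obtain c where c: "CG Q a = {x\<in>Q. idot a x \<le> c}" using CG_form[OF assms(1)] by blast
  have e: "{x\<in>Q. idot a x \<le> c} = Q \<inter> {x. ivec a \<bullet> x \<le> c}" by (auto simp: idot_inner)
  show ?thesis unfolding c e
    by (auto intro!: compact_Int_closed convex_Int assms closed_halfspace_le convex_halfspace_le)
qed

lemma CG_list_append: "CG_list Q (xs @ ys) = CG_list (CG_list Q xs) ys"
  by (induction xs arbitrary: Q) auto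

lemma aff_drop:
  fixes Q :: "(real^'n) set"
  assumes "Q2 \<subseteq> Q \<inter> {x. c \<bullet> x = \<beta>}" "q \<in> Q" "c \<bullet> q \<noteq> \<beta>"
  shows "aff_dim Q2 < aff_dim Q"
proof (rule aff_dim_psubset)
  have 1: "affine hull Q2 \<subseteq> affine hull Q" using assms(1) by (simp add: hull_mono)
  have 2: "affine hull Q2 \<subseteq> {x. c \<bullet> x = \<beta>}"
    using assms(1) by (intro hull_minimal) (auto simp: affine_hyperplane)
  have "q \<in> affine hull Q" using assms(2) by (simp add: hull_inc)
  moreover have "q \<notin> affine hull Q2" using 2 assms(3) by blast
  ultimately show "affine hull Q2 \<subset> affine hull Q" using 1 by blast
qed

lemma avg:
  fixes Q :: "(real^'n) set" and w :: "nat \<Rightarrow> real^'n"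
  assumes "convex Q" "finite J" "0 \<notin> J" "card J \<le> n+1" "y0 \<in> Q"
   "\<forall>i\<in>J. y i \<in> Q" "\<forall>i\<in>J. \<forall>x\<in>Q. w i \<bullet> x \<le> \<beta> i + \<gamma> i"
   "\<forall>i\<in>J. w i \<bullet> y i \<le> \<beta> i - real n * \<gamma> i"
  shows "\<exists>z\<in>Q. \<forall>i\<in>J. w i \<bullet> z \<le> \<beta> i"
proof -
  define u :: "nat \<Rightarrow> real" where "u j = (if j = 0 then (real n + 1 - real (card J)) / (real n + 1) else 1 / (real n + 1))" for j
  define Y :: "nat \<Rightarrow> real^'n" where "Y j = (if j = 0 then y0 else y j)" for j
  define I where "I = insert 0 J"
  have fI: "finite I" using assms(2) by (simp add: I_def)
  have su: "sum u I = 1"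
  proof -
    have "sum u I = u 0 + sum u J" using assms(2,3) by (simp add: I_def)
    also have "sum u J = real (card J) / (real n + 1)"
    proof -
      have "sum u J = (\<Sum>j\<in>J. 1 / (real n + 1))" using assms(3) by (intro sum.cong) (auto simp: u_def)
      then show ?thesis by simp
    qed
    finally have "sum u I = (real n + 1 - real (card J)) / (real n + 1) + real (card J) / (real n + 1)"
      by (simp add: u_def)
    also have "\<dots> = 1" by (simp add: add_divide_distrib[symmetric])
    finally show ?thesis .
  qed
  have u0: "\<And>j. u j \<ge> 0" using assms(4) by (simp add: u_def)
  have YQ: "\<And>j. j \<in> I \<Longrightarrow> Y j \<in> Q" using assms(5,6) by (auto simp: I_def Y_def)
  define z where "z = (\<Sum>j\<in>I. u j *\<^sub>R Y j)"
  have zQ: "z \<in> Q" unfolding z_def by (rule convex_sum[OF fI assms(1) su]) (use u0 YQ in auto)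
  have "w i \<bullet> z \<le> \<beta> i" if iJ: "i \<in> J" for i
  proof -
    have i0: "i \<noteq> 0" using assms(3) iJ by (metis)
    have iI: "i \<in> I" using iJ by (simp add: I_def)
    have "w i \<bullet> z = (\<Sum>j\<in>I. u j * (w i \<bullet> Y j))"
      by (simp add: z_def inner_sum_right)
    also have "\<dots> = u i * (w i \<bullet> Y i) + (\<Sum>j\<in>I-{i}. u j * (w i \<bullet> Y j))"
      using fI iI by (simp add: sum.remove)
    also have "\<dots> \<le> u i * (\<beta> i - real n * \<gamma> i) + (\<Sum>j\<in>I-{i}. u j * (\<beta> i + \<gamma> i))"
    proof (rule add_mono)
      show "u i * (w i \<bullet> Y i) \<le> u i * (\<beta> i - real n * \<gamma> i)"
        using assms(8) iJ i0 u0 by (simp add: Y_def mult_left_mono)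
      show "(\<Sum>j\<in>I-{i}. u j * (w i \<bullet> Y j)) \<le> (\<Sum>j\<in>I-{i}. u j * (\<beta> i + \<gamma> i))"
        using assms(7) iJ YQ u0 by (intro sum_mono mult_left_mono) auto
    qed
    also have "(\<Sum>j\<in>I-{i}. u j * (\<beta> i + \<gamma> i)) = (1 - u i) * (\<beta> i + \<gamma> i)"
      using fI iI su by (simp add: sum_distrib_right[symmetric] sum_diff1)
    also have "u i * (\<beta> i - real n * \<gamma> i) + (1 - u i) * (\<beta> i + \<gamma> i) = \<beta> i"
    proof -
      have d: "real n + 1 \<noteq> 0" by linarith
      have "u i = 1 / (real n + 1)" using i0 by (simp add: u_def)
      then have h: "u i * (real n + 1) = 1" using d by simp
      have "u i * (\<beta> i - real n * \<gamma> i) + (1 - u i) * (\<beta> i + \<gamma> i)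
            = \<beta> i + \<gamma> i - \<gamma> i * (u i * (real n + 1))" by (simp add: algebra_simps)
      then show ?thesis using h by simp
    qed
    finally show ?thesis .
  qed
  then show ?thesis using zQ by blast
qed

lemma valid_subst_D:
  fixes a :: "int^'n"
  assumes "valid_subst a b R N M a' b' k as bs \<gamma>"
  shows "k \<in> {1..CARD('n)+1} \<and> \<gamma> k = 0 \<and>
   (\<forall>l\<in>{1..k-1}.
         {x \<in> l1ball (real R). idot a' x \<le> b' \<and> (\<forall>i\<in>{1..<l}. idot (as i) x = bs i)}
         \<subseteq> {x. idot (as l) x < bs l + 1}) \<and>
   (\<forall>l\<in>{1..k}.
         {x \<in> l1ball (real R). idot a' x \<le> b' \<and> (\<forall>i\<in>{1..<l}. idot (as i) x = bs i)}
         \<subseteq> {x. idot a x \<le> b + \<gamma> l}) \<and>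
   (\<forall>l\<in>{1..k-1}.
         {x \<in> l1ball (real R). idot (as l) x \<le> bs l - 1 \<and> (\<forall>i\<in>{1..<l}. idot (as i) x = bs i)}
         \<subseteq> {x. idot a x \<le> b - real CARD('n) * \<gamma> l})"
  using assms unfolding valid_subst_def Let_def by (elim conjE) (intro conjI; assumption)

theorem theorem3p3:
  fixes K :: "(real ^ 'n) set" and R m :: nat
    and A :: "nat \<Rightarrow> int ^ 'n" and b :: "nat \<Rightarrow> int"
    and A' :: "nat \<Rightarrow> int ^ 'n" and b' :: "nat \<Rightarrow> int" and k :: "nat \<Rightarrow> nat"
    and as :: "nat \<Rightarrow> nat \<Rightarrow> int ^ 'n" and bs :: "nat \<Rightarrow> nat \<Rightarrow> int"
    and \<gamma> :: "nat \<Rightarrow> nat \<Rightarrow> real"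
  defines "N \<equiv> 10 * CARD('n) * R"
    and "M \<equiv> (10 * CARD('n) * R) ^ (CARD('n) + 2)"
  assumes "compact K" and "convex K" and "K \<subseteq> l1ball (real R)"
    and "\<forall>i\<in>{1..m}. A i \<noteq> 0"
    and "{x. \<forall>i\<in>{1..m}. idot (A i) x \<le> b i} \<inter> K = {}"
    and "\<forall>i\<in>{1..m}. valid_subst (A i) (b i) R N M (A' i) (b' i) (k i) (as i) (bs i) (\<gamma> i)"
  shows "\<exists>js ps :: nat list.
           length js = length ps \<and>
           (\<forall>r<length js. js ! r \<in> {1..m} \<and> ps ! r \<in> {1..k (js ! r) - 1}) \<and>
           CG_list (K \<inter> {x. \<forall>i\<in>{1..m}. idot (A' i) x \<le> b' i})
             (concat (map (\<lambda>(j, p). [as j p, - as j p]) (zip js ps))) = {} \<and>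
           2 * length js \<le> 2 * (CARD('n) + 1)"
proof -
  define n where "n = CARD('n)"
  define Pp where "Pp = {x. \<forall>i\<in>{1..m}. idot (A' i) x \<le> b' i}"
  define Q0 where "Q0 = K \<inter> Pp"
  define F where "F L = concat (map (\<lambda>(j, p). [as j p, - as j p]) L)" for L :: "(nat \<times> nat) list"
  define ok where "ok L = (\<forall>(j,p)\<in>set L. j\<in>{1..m} \<and> p\<in>{1..k j - 1})" for L :: "(nat \<times> nat) list"
  define E where "E i l = {x. \<forall>j\<in>{1..<l}. idot (as i j) x = bs i j}" for i l
  have V: "valid_subst (A i) (b i) R N M (A' i) (b' i) (k i) (as i) (bs i) (\<gamma> i)"
    if "i \<in> {1..m}" for i using assms(8) that by blast
  have D: "k i \<in> {1..n+1} \<and> \<gamma> i (k i) = 0 \<and>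
   (\<forall>l\<in>{1..k i-1}.
         {x \<in> l1ball (real R). idot (A' i) x \<le> b' i \<and> (\<forall>j\<in>{1..<l}. idot (as i j) x = bs i j)}
         \<subseteq> {x. idot (as i l) x < real_of_int (bs i l) + 1}) \<and>
   (\<forall>l\<in>{1..k i}.
         {x \<in> l1ball (real R). idot (A' i) x \<le> b' i \<and> (\<forall>j\<in>{1..<l}. idot (as i j) x = bs i j)}
         \<subseteq> {x. idot (A i) x \<le> b i + \<gamma> i l}) \<and>
   (\<forall>l\<in>{1..k i-1}.
         {x \<in> l1ball (real R). idot (as i l) x \<le> real_of_int (bs i l) - 1 \<and> (\<forall>j\<in>{1..<l}. idot (as i j) x = bs i j)}
         \<subseteq> {x. idot (A i) x \<le> b i - real n * \<gamma> i l})"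
    if "i \<in> {1..m}" for i
    unfolding n_def by (rule valid_subst_D[OF V[OF that]])
  have V1: "k i \<in> {1..n+1}" if "i \<in> {1..m}" for i
    using D[OF that] by (rule conjunct1)
  have V2: "\<gamma> i (k i) = 0" if "i \<in> {1..m}" for i
    using D[OF that] by (elim conjE)
  have V3: "idot (as i l) x < real_of_int (bs i l) + 1"
    if "i \<in> {1..m}" "l \<in> {1..k i - 1}" "x \<in> l1ball (real R)" "idot (A' i) x \<le> b' i" "x \<in> E i l" for i l x
  proof -
    have all: "\<forall>l\<in>{1..k i-1}.
         {x \<in> l1ball (real R). idot (A' i) x \<le> b' i \<and> (\<forall>j\<in>{1..<l}. idot (as i j) x = bs i j)}
         \<subseteq> {x. idot (as i l) x < real_of_int (bs i l) + 1}" using D[OF that(1)] by (elim conjE)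
    have "x \<in> {x \<in> l1ball (real R). idot (A' i) x \<le> b' i \<and> (\<forall>j\<in>{1..<l}. idot (as i j) x = bs i j)}"
      using that(3-5) by (simp add: E_def)
    from subsetD[OF bspec[OF all that(2)] this] show ?thesis by simp
  qed
  have V4: "idot (A i) x \<le> b i + \<gamma> i l"
    if "i \<in> {1..m}" "l \<in> {1..k i}" "x \<in> l1ball (real R)" "idot (A' i) x \<le> b' i" "x \<in> E i l" for i l x
  proof -
    have all: "\<forall>l\<in>{1..k i}.
         {x \<in> l1ball (real R). idot (A' i) x \<le> b' i \<and> (\<forall>j\<in>{1..<l}. idot (as i j) x = bs i j)}
         \<subseteq> {x. idot (A i) x \<le> b i + \<gamma> i l}" using D[OF that(1)] by (elim conjE)
    have "x \<in> {x \<in> l1ball (real R). idot (A' i) x \<le> b' i \<and> (\<forall>j\<in>{1..<l}. idot (as i j) x = bs i j)}"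
      using that(3-5) by (simp add: E_def)
    from subsetD[OF bspec[OF all that(2)] this] show ?thesis by simp
  qed
  have V5: "idot (A i) x \<le> b i - real n * \<gamma> i l"
    if "i \<in> {1..m}" "l \<in> {1..k i - 1}" "x \<in> l1ball (real R)" "idot (as i l) x \<le> real_of_int (bs i l) - 1" "x \<in> E i l" for i l x
  proof -
    have all: "\<forall>l\<in>{1..k i-1}.
         {x \<in> l1ball (real R). idot (as i l) x \<le> real_of_int (bs i l) - 1 \<and> (\<forall>j\<in>{1..<l}. idot (as i j) x = bs i j)}
         \<subseteq> {x. idot (A i) x \<le> b i - real n * \<gamma> i l}" using D[OF that(1)] by (elim conjE)
    have "x \<in> {x \<in> l1ball (real R). idot (as i l) x \<le> real_of_int (bs i l) - 1 \<and> (\<forall>j\<in>{1..<l}. idot (as i j) x = bs i j)}"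
      using that(3-5) by (simp add: E_def)
    from subsetD[OF bspec[OF all that(2)] this] show ?thesis by simp
  qed
  have Q0K: "Q0 \<subseteq> K" by (simp add: Q0_def)
  have Q0ball: "Q0 \<subseteq> l1ball (real R)" using assms(5) Q0K by blast
  have Q0P: "\<And>x i. x \<in> Q0 \<Longrightarrow> i \<in> {1..m} \<Longrightarrow> idot (A' i) x \<le> b' i"
    by (simp add: Q0_def Pp_def)
  have step: "\<exists>i l. i \<in> {1..m} \<and> l \<in> {1..k i - 1} \<and> Q \<subseteq> E i l \<and>
                (\<exists>q\<in>Q. idot (as i l) q \<noteq> bs i l) \<and> (\<forall>y\<in>Q. idot (as i l) y > bs i l - 1)"
    if Qc: "compact Q" "convex Q" "Q \<subseteq> Q0" "Q \<noteq> {}" for Q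
  proof (rule ccontr)
    assume neg: "\<not> ?thesis"
    define lev where "lev i = Max {l\<in>{1..k i}. Q \<subseteq> E i l}" for i
    have levp: "lev i \<in> {1..k i} \<and> Q \<subseteq> E i (lev i) \<and> (\<forall>l\<in>{1..k i}. Q \<subseteq> E i l \<longrightarrow> l \<le> lev i)"
      if "i \<in> {1..m}" for i
    proof -
      have ne: "1 \<in> {l\<in>{1..k i}. Q \<subseteq> E i l}" using V1[OF that] by (auto simp: E_def)
      have fin: "finite {l\<in>{1..k i}. Q \<subseteq> E i l}" by simp
      show ?thesis using Max_in[OF fin] Max_ge[OF fin] ne unfolding lev_def by blast
    qed
    define g where "g i = \<gamma> i (lev i)" for i
    have B: "\<forall>x\<in>Q. idot (A i) x \<le> b i + g i" if "i \<in> {1..m}" for i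
      using V4[OF that, of "lev i"] levp[OF that] Qc(3) Q0ball Q0P that unfolding g_def by (meson subsetD)
    have W: "\<exists>y\<in>Q. idot (A i) y \<le> b i - real n * g i" if i: "i \<in> {1..m}" for i
    proof (cases "lev i = k i")
      case True
      then have "g i = 0" using V2[OF i] by (simp add: g_def)
      then show ?thesis using B[OF i] Qc(4) by auto
    next
      case False
      define l where "l = lev i"
      have l: "l \<in> {1..k i - 1}" using levp[OF i] False by (auto simp: l_def)
      have QE: "Q \<subseteq> E i l" using levp[OF i] by (simp add: l_def)
      have "\<exists>q\<in>Q. idot (as i l) q \<noteq> bs i l"
      proof (rule ccontr)
        assume "\<not> ?thesis"
        then have all: "\<forall>q\<in>Q. idot (as i l) q = bs i l" by blast
        have "Q \<subseteq> E i (l+1)"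
        proof
          fix x assume x: "x \<in> Q"
          then have "x \<in> E i l" using QE by blast
          then show "x \<in> E i (l+1)" using all x by (auto simp: E_def less_Suc_eq)
        qed
        moreover have "l + 1 \<in> {1..k i}" using l by auto
        ultimately have "l + 1 \<le> lev i" using levp[OF i] by blast
        then show False by (simp add: l_def)
      qed
      then obtain y where y: "y \<in> Q" "idot (as i l) y \<le> real_of_int (bs i l) - 1"
        using neg i l QE by force
      have "idot (A i) y \<le> b i - real n * \<gamma> i l"
        using V5[OF i l _ y(2)] y(1) Qc(3) Q0ball QE by (meson subsetD)
      then show ?thesis using y(1) by (auto simp: g_def l_def)
    qed
    obtain y where y: "\<And>i. i \<in> {1..m} \<Longrightarrow> y i \<in> Q \<and> idot (A i) (y i) \<le> b i - real n * g i"
      using W by metis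
    obtain y0 where y0: "y0 \<in> Q" using Qc(4) by blast
    define S where "S i = Q \<inter> {x. idot (A i) x \<le> b i}" for i
    define Fam where "Fam = insert Q (S ` {1..m})"
    have sub: "\<Inter>T \<inter> Q \<noteq> {}" if T: "T \<subseteq> Fam" "card T \<le> n + 1" for T
    proof -
      have "T - {Q} \<subseteq> S ` {1..m}" using T(1) by (auto simp: Fam_def)
      then obtain U where U: "U \<subseteq> {1..m}" "inj_on S U" "T - {Q} = S ` U"
        by (auto simp: subset_image_inj)
      have finU: "finite U" using U(1) finite_subset by blast
      have finT: "finite T" using T(1) by (auto simp: Fam_def intro: finite_subset)
      have "card U = card (T - {Q})" using U by (simp add: card_image)
      also have "\<dots> \<le> card T" using finT by (simp add: card_mono)
      finally have cU: "card U \<le> n + 1" using T(2) by simp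
      have "0 \<notin> U" using U(1) by auto
      have h1: "\<forall>i\<in>U. y i \<in> Q" using y U(1) by blast
      have h2: "\<forall>i\<in>U. \<forall>x\<in>Q. ivec (A i) \<bullet> x \<le> real_of_int (b i) + g i"
        using B U(1) unfolding idot_inner by blast
      have h3: "\<forall>i\<in>U. ivec (A i) \<bullet> y i \<le> real_of_int (b i) - real n * g i"
        using y U(1) unfolding idot_inner by blast
      obtain z where z: "z \<in> Q" "\<forall>i\<in>U. ivec (A i) \<bullet> z \<le> real_of_int (b i)"
        using avg[OF Qc(2) finU \<open>0 \<notin> U\<close> cU y0 h1 h2 h3] by blast
      have "z \<in> \<Inter>T"
      proof
        fix t assume "t \<in> T"
        then have "t = Q \<or> t \<in> S ` U" using U(3) by blast
        then show "z \<in> t" using z by (auto simp: S_def idot_inner)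
      qed
      then show ?thesis using z(1) by blast
    qed
    have "\<Inter>Fam \<noteq> {}"
    proof (cases "card Fam \<ge> n + 1")
      case True
      have conv: "\<forall>s\<in>Fam. convex s"
        using Qc(2) by (auto simp: Fam_def S_def idot_inner intro!: convex_Int convex_halfspace_le)
      show ?thesis
      proof (rule Helly)
        show "DIM(real^'n) + 1 \<le> card Fam" using True by (simp add: n_def)
        show "\<forall>s\<in>Fam. convex s" by (rule conv)
        fix t assume "t \<subseteq> Fam" "card t = DIM(real^'n) + 1"
        then show "\<Inter>t \<noteq> {}" using sub[of t] by (auto simp: n_def)
      qed
    next
      case False
      then show ?thesis using sub[of Fam] by auto
    qed
    then obtain x where x: "x \<in> \<Inter>Fam" by blast
    then have "x \<in> Q" "\<forall>i\<in>{1..m}. idot (A i) x \<le> b i" by (auto simp: Fam_def S_def)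
    then show False using assms(7) Qc(3) Q0K by blast
  qed
  have main: "\<forall>Q. compact Q \<and> convex Q \<and> Q \<subseteq> Q0 \<and> aff_dim Q + 1 \<le> int d \<longrightarrow>
                (\<exists>L. length L \<le> d \<and> ok L \<and> CG_list Q (F L) = {})" for d
  proof (induction d)
    case 0
    show ?case
    proof (intro allI impI)
      fix Q :: "(real^'n) set" assume "compact Q \<and> convex Q \<and> Q \<subseteq> Q0 \<and> aff_dim Q + 1 \<le> int 0"
      then have "aff_dim Q = -1" using aff_dim_geq[of Q] by linarith
      then have "Q = {}" using aff_dim_empty by blast
      then show "\<exists>L. length L \<le> 0 \<and> ok L \<and> CG_list Q (F L) = {}"
        by (intro exI[of _ "[]"]) (simp add: ok_def F_def)
    qed
  next
    case (Suc d)
    show ?case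
    proof (intro allI impI)
      fix Q :: "(real^'n) set" assume H: "compact Q \<and> convex Q \<and> Q \<subseteq> Q0 \<and> aff_dim Q + 1 \<le> int (Suc d)"
      show "\<exists>L. length L \<le> Suc d \<and> ok L \<and> CG_list Q (F L) = {}"
      proof (cases "Q = {}")
        case True
        then show ?thesis by (intro exI[of _ "[]"]) (simp add: ok_def F_def)
      next
        case False
        obtain i l where il: "i \<in> {1..m}" "l \<in> {1..k i - 1}" "Q \<subseteq> E i l"
            "\<exists>q\<in>Q. idot (as i l) q \<noteq> bs i l" "\<forall>y\<in>Q. idot (as i l) y > bs i l - 1"
          using step[of Q] H False by blast
        define a where "a = as i l"
        define \<beta> where "\<beta> = bs i l"
        define Q1 where "Q1 = CG Q a"
        define Q2 where "Q2 = CG Q1 (- a)"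
        have Q1p: "compact Q1 \<and> convex Q1 \<and> Q1 \<subseteq> Q" unfolding Q1_def using CG_compact_convex H by blast
        have Q2p: "compact Q2 \<and> convex Q2 \<and> Q2 \<subseteq> Q1" unfolding Q2_def using CG_compact_convex Q1p by blast
        have lt: "\<forall>x\<in>Q. idot a x < real_of_int \<beta> + 1"
          using V3[OF il(1,2)] il(3) H Q0ball Q0P il(1) unfolding a_def \<beta>_def by (meson subsetD)
        have Q1s: "Q1 \<subseteq> {x\<in>Q. idot a x \<le> \<beta>}"
          unfolding Q1_def using CG_le H lt by blast
        have gt: "\<forall>x\<in>Q1. idot (- a) x < real_of_int (- \<beta>) + 1"
        proof
          fix x assume "x \<in> Q1"
          then have "x \<in> Q" using Q1p by blast
          then have "real_of_int (bs i l) - 1 < idot (as i l) x" using il(5) by auto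
          then show "idot (- a) x < real_of_int (- \<beta>) + 1" unfolding a_def \<beta>_def idot_neg by simp
        qed
        have Q2s: "Q2 \<subseteq> {x\<in>Q1. idot (- a) x \<le> - \<beta>}"
          unfolding Q2_def using CG_le Q1p gt by blast
        have Q2h: "Q2 \<subseteq> Q \<inter> {x. ivec a \<bullet> x = \<beta>}"
        proof
          fix x assume x: "x \<in> Q2"
          then have "x \<in> Q1" "- idot a x \<le> - \<beta>" using Q2s by (auto simp: idot_neg)
          then have "x \<in> Q" "idot a x \<le> \<beta>" "idot a x \<ge> \<beta>" using Q1s by auto
          then show "x \<in> Q \<inter> {x. ivec a \<bullet> x = \<beta>}" by (simp add: idot_inner)
        qed
        obtain q where q: "q \<in> Q" "ivec a \<bullet> q \<noteq> \<beta>" using il(4) by (auto simp: a_def \<beta>_def idot_inner)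
        have "aff_dim Q2 < aff_dim Q" by (rule aff_drop[OF Q2h q])
        then have "aff_dim Q2 + 1 \<le> int d" using H by linarith
        then obtain L where L: "length L \<le> d" "ok L" "CG_list Q2 (F L) = {}"
          using Suc.IH Q2p Q1p H by blast
        show ?thesis
        proof (intro exI[of _ "(i,l) # L"] conjI)
          show "length ((i, l) # L) \<le> Suc d" using L by simp
          show "ok ((i, l) # L)" using L(2) il(1,2) by (simp add: ok_def)
          show "CG_list Q (F ((i, l) # L)) = {}" using L(3)
            by (simp add: F_def Q2_def Q1_def a_def)
        qed
      qed
    qed
  qed
  have PpI: "Pp = (\<Inter>i\<in>{1..m}. {x. ivec (A' i) \<bullet> x \<le> b' i})"
    by (auto simp: Pp_def idot_inner)
  have Q0c: "compact Q0" unfolding Q0_def PpI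
    by (intro compact_Int_closed assms closed_INT ballI closed_halfspace_le)
  have Q0v: "convex Q0" unfolding Q0_def PpI
    by (intro convex_Int assms convex_INT ballI convex_halfspace_le)
  have "aff_dim Q0 + 1 \<le> int (n + 1)" using aff_dim_le_DIM[of Q0] by (simp add: n_def)
  then obtain L where L: "length L \<le> n + 1" "ok L" "CG_list Q0 (F L) = {}"
    using main[of "n+1"] Q0c Q0v by blast
  have g1: "\<forall>r<length (map fst L). map fst L ! r \<in> {1..m} \<and> map snd L ! r \<in> {1..k (map fst L ! r) - 1}"
  proof (intro allI impI)
    fix r assume r: "r < length (map fst L)"
    then have rL: "r < length L" by simp
    obtain j p where jp: "L ! r = (j, p)" by (cases "L ! r")
    have "(j, p) \<in> set L" using rL jp nth_mem by metis
    then have "j \<in> {1..m} \<and> p \<in> {1..k j - 1}" using L(2) unfolding ok_def by blast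
    moreover have "map fst L ! r = j" "map snd L ! r = p" using rL jp by simp_all
    ultimately show "map fst L ! r \<in> {1..m} \<and> map snd L ! r \<in> {1..k (map fst L ! r) - 1}" by simp
  qed
  have g2: "CG_list (K \<inter> {x. \<forall>i\<in>{1..m}. idot (A' i) x \<le> b' i})
             (concat (map (\<lambda>(j, p). [as j p, - as j p]) (zip (map fst L) (map snd L)))) = {}"
    using L(3) by (simp add: zip_map_fst_snd Q0_def Pp_def F_def)
  have g3: "2 * length (map fst L) \<le> 2 * (CARD('n) + 1)" using L(1) by (simp add: n_def)
  have g0: "length (map fst L) = length (map snd L)" by simp
  show ?thesis using g0 g1 g2 g3 by blast
qed

end
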